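(* Let $A$ and $B$ be flat layouts. Then $\Phi_A=\Phi_B$ if and only if $\mathrm{coal}^\flat(A)=\mathrm{coal}^\flat(B)$.
   Context: A flat layout $L=(s_1,\dots,s_m):(d_1,\dots,d_m)$ consists of a tuple of positive integers (shape) and a tuple of nonnegative integers (stride) of the same length; its modes are $s_i:d_i$. Its layout function $\Phi_L:[0,s_1\cdots s_m)\to\mathbb{Z}$ is $\Phi_L(x)=\sum_{i=1}^m x_id_i$ where $x_i=\lfloor x/(s_1\cdots s_{i-1})\rfloor \bmod s_i$ (so equality $\Phi_A=\Phi_B$ includes equality of domains). $\mathrm{squeeze}(L)$ removes all modes with $s_i=1$. $\mathrm{coal}^\flat(L)$ is obtained from $\mathrm{squeeze}(L)$ by repeatedly replacing adjacent modes $s_i,s_{i+1}:d_i,d_{i+1}$ with $d_{i+1}=s_id_i$ by the single mode $s_is_{i+1}:d_i$, until no such adjacent pair remains (equivalently, merging each maximal run of consecutive modes linked by $d_{i+1}=s_id_i$ into one mode with shape the product and stride the first stride). *)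

theory Defs
  imports Main
begin

type_synonym layout = "(nat \<times> nat) list"

definition shape :: "layout \<Rightarrow> nat list" where
  "shape L = map fst L"

definition stride :: "layout \<Rightarrow> nat list" where
  "stride L = map snd L"

definition flat_layout :: "layout \<Rightarrow> bool" where
  "flat_layout L \<longleftrightarrow> (\<forall>m\<in>set L. fst m > 0)"

definition layout_size :: "layout \<Rightarrow> nat" where
  "layout_size L = prod_list (shape L)"

text \<open>Coordinate x_i = floor(x / (s_1 ... s_{i-1})) mod s_i (0-indexed here).\<close>
definition coord :: "layout \<Rightarrow> nat \<Rightarrow> nat \<Rightarrow> nat" where
  "coord L x i = (x div prod_list (take i (shape L))) mod (shape L ! i)"

text \<open>The layout function, as a partial function with domain [0, size L);
  None outside the domain, so equality of layout functions includes equality of domains.\<close>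
definition layout_fun :: "layout \<Rightarrow> nat \<Rightarrow> int option" where
  "layout_fun L x = (if x < layout_size L
     then Some (\<Sum>i<length L. int (coord L x i) * int (stride L ! i))
     else None)"

definition squeeze :: "layout \<Rightarrow> layout" where
  "squeeze L = filter (\<lambda>m. fst m \<noteq> 1) L"

fun merge_runs :: "layout \<Rightarrow> layout" where
  "merge_runs [] = []"
| "merge_runs (m # rest) =
     (case merge_runs rest of
        [] \<Rightarrow> [m]
      | m2 # r \<Rightarrow> (if snd m2 = fst m * snd m
                    then (fst m * fst m2, snd m) # r
                    else m # m2 # r))"

definition coal_flat :: "layout \<Rightarrow> layout" where
  "coal_flat L = merge_runs (squeeze L)"

end

theory Submission
  imports Defs
begin

fun phi :: "layout \<Rightarrow> nat \<Rightarrow> nat" where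
  "phi [] x = 0"
| "phi (m # R) x = (x mod fst m) * snd m + phi R (x div fst m)"

fun coalesced :: "layout \<Rightarrow> bool" where
  "coalesced [] = True"
| "coalesced [m] = (fst m > 1)"
| "coalesced (m # m2 # r) = (fst m > 1 \<and> snd m2 \<noteq> fst m * snd m \<and> coalesced (m2 # r))"

lemma coord_Cons0: "coord ((s,d) # R) x 0 = x mod s"
  by (simp add: coord_def shape_def)

lemma coord_ConsSuc: "coord ((s,d) # R) x (Suc i) = coord R (x div s) i"
  by (simp add: coord_def shape_def div_mult2_eq)

lemma sum_phi: "(\<Sum>i<length L. int (coord L x i) * int (stride L ! i)) = int (phi L x)"
proof (induction L arbitrary: x)
  case Nil
  then show ?case by simp
next
  case (Cons m R)
  obtain s d where m: "m = (s,d)" by (cases m)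
  have "(\<Sum>i<length (m#R). int (coord (m#R) x i) * int (stride (m#R) ! i))
      = int (coord (m#R) x 0) * int (stride (m#R) ! 0)
        + (\<Sum>i<length R. int (coord (m#R) x (Suc i)) * int (stride (m#R) ! Suc i))"
    by (simp only: length_Cons sum.lessThan_Suc_shift)
  also have "\<dots> = int (x mod s) * int d + (\<Sum>i<length R. int (coord R (x div s) i) * int (stride R ! i))"
    by (simp add: m coord_Cons0 coord_ConsSuc stride_def)
  also have "\<dots> = int (phi (m#R) x)" using Cons.IH by (simp add: m)
  finally show ?case .
qed

lemma layout_fun_phi: "layout_fun L x = (if x < layout_size L then Some (int (phi L x)) else None)"
  by (simp add: layout_fun_def sum_phi)

lemma size_Cons: "layout_size (m # R) = fst m * layout_size R"
  by (simp add: layout_size_def shape_def)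

lemma size_Nil: "layout_size [] = 1"
  by (simp add: layout_size_def shape_def)

lemma phi_0[simp]: "phi L 0 = 0"
  by (induction L) auto

lemma phi_squeeze: "phi (squeeze L) x = phi L x"
  unfolding squeeze_def by (induction L arbitrary: x) auto

lemma size_squeeze: "layout_size (squeeze L) = layout_size L"
  unfolding squeeze_def by (induction L) (auto simp: size_Cons size_Nil)

lemma merge_props: "phi (merge_runs L) x = phi L x \<and> layout_size (merge_runs L) = layout_size L"
proof (induction L arbitrary: x)
  case Nil
  then show ?case by simp
next
  case (Cons m rest)
  obtain s d where m: "m = (s,d)" by (cases m)
  show ?case
  proof (cases "merge_runs rest")
    case Nil
    then show ?thesis using Cons.IH[of "x div s"] Cons.IH[of 0]
      by (auto simp: m size_Cons size_Nil)
  next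
    case (Cons m2 r)
    note C = this
    obtain s2 d2 where m2: "m2 = (s2,d2)" by (cases m2)
    show ?thesis
    proof (cases "d2 = s * d")
      case True
      have IH1: "phi rest (x div s) = (x div s mod s2) * d2 + phi r (x div s div s2)"
        using Cons.IH[of "x div s"] C m2 by simp
      have IH2: "layout_size rest = s2 * layout_size r"
        using Cons.IH[of 0] C m2 by (simp add: size_Cons)
      have "phi (merge_runs (m # rest)) x = (x mod (s*s2)) * d + phi r (x div (s*s2))"
        using C m2 m True by simp
      also have "\<dots> = (x mod s) * d + (x div s mod s2) * (s * d) + phi r (x div s div s2)"
        unfolding mod_mult2_eq[of x s s2] div_mult2_eq[of x s s2] by (simp add: algebra_simps)
      also have "\<dots> = phi (m # rest) x" using IH1 True m by simp
      finally show ?thesis using C m2 m True IH2 by (simp add: size_Cons)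
    next
      case False
      then show ?thesis using Cons.IH[of "x div s"] C m2 m
        by (simp add: size_Cons)
    qed
  qed
qed

lemma gt1: "1 < a \<Longrightarrow> 1 < b \<Longrightarrow> 1 < a * (b::nat)"
  using less_1_mult by blast

lemma merge_coalesced: "\<forall>m\<in>set L. fst m > 1 \<Longrightarrow> coalesced (merge_runs L)"
proof (induction L)
  case Nil
  then show ?case by simp
next
  case (Cons m rest)
  obtain s d where m: "m = (s,d)" by (cases m)
  have IH: "coalesced (merge_runs rest)" using Cons by simp
  have s1: "s > 1" using Cons.prems m by simp
  show ?case
  proof (cases "merge_runs rest")
    case Nil
    then show ?thesis using s1 m by simp
  next
    case (Cons m2 r)
    note C = this
    obtain s2 d2 where m2: "m2 = (s2,d2)" by (cases m2)
    have s2: "s2 > 1" using IH C m2 by (cases r) auto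
    show ?thesis
    proof (cases "d2 = s * d")
      case True
      have "coalesced ((s*s2, d) # r)"
      proof (cases r)
        case Nil
        then show ?thesis using gt1[OF s1 s2] by simp
      next
        case (Cons h r')
        then show ?thesis using IH C m2 True gt1[OF s1 s2]
          by (simp add: mult.commute mult.left_commute)
      qed
      then show ?thesis using C m2 m True by simp
    next
      case False
      then show ?thesis using C m2 m IH s1 by simp
    qed
  qed
qed

lemma coalesced_tail: "coalesced (m # R) \<Longrightarrow> coalesced R \<and> fst m > 1"
  by (cases R) auto

lemma coalesced_size_pos: "coalesced L \<Longrightarrow> layout_size L > 0"
  by (induction L rule: coalesced.induct) (auto simp: size_Cons size_Nil)

lemma coalesced_size1: "coalesced L \<Longrightarrow> layout_size L = 1 \<Longrightarrow> L = []"
proof (cases L)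
  case (Cons m R)
  assume a: "coalesced L" "layout_size L = 1"
  then have "fst m > 1" "layout_size R > 0" using Cons coalesced_tail coalesced_size_pos by blast+
  moreover have "fst m \<le> fst m * layout_size R" using \<open>layout_size R > 0\<close> by simp
  ultimately have "fst m * layout_size R > 1" by linarith
  then show ?thesis using a Cons by (simp add: size_Cons)
qed simp

lemma uniq: "coalesced C \<Longrightarrow> coalesced D \<Longrightarrow> layout_size C = layout_size D
  \<Longrightarrow> (\<forall>x < layout_size C. phi C x = phi D x) \<Longrightarrow> C = D"
proof (induction C arbitrary: D)
  case Nil
  then show ?case using coalesced_size1[of D] by (simp add: size_Nil)
next
  case (Cons m C')
  note P = Cons.prems
  note IH = Cons.IH
  show ?case
  proof (cases D)
    case Nil
    then show ?thesis using P coalesced_size1[of "m # C'"] by (simp add: size_Nil)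
  next
    case DC: (Cons n D')
    obtain s d where m: "m = (s,d)" by (cases m)
    obtain t e where n: "n = (t,e)" by (cases n)
    have cC: "coalesced C'" "s > 1" using coalesced_tail[of m C'] P(1) m by auto
    have cD: "coalesced D'" "t > 1" using coalesced_tail[of n D'] P(2) DC n by auto
    have pC: "layout_size C' > 0" using cC coalesced_size_pos by blast
    have pD: "layout_size D' > 0" using cD coalesced_size_pos by blast
    have szC: "layout_size (m # C') = s * layout_size C'" by (simp add: m size_Cons)
    have szD: "layout_size D = t * layout_size D'" by (simp add: DC n size_Cons)
    have sz: "s * layout_size C' = t * layout_size D'" using szC szD P(3) by simp
    have sle: "s \<le> s * layout_size C'" using pC by simp
    have "1 < layout_size (m # C')" using cC sle szC by linarith
    then have "phi (m # C') 1 = phi D 1" using P(4) by blast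
    then have de: "d = e" using cC cD m n DC by simp
    have key: False if lt: "s < t" and
      c: "coalesced ((s,d) # C')" and
      eq: "\<forall>x < s * layout_size C'. phi ((s,d) # C') x = phi ((t,d) # D') x" and
      sz': "s * layout_size C' = t * layout_size D'" and pD': "layout_size D' > 0"
      for s t d C' D'
    proof (cases C')
      case Nil
      have "t \<le> t * layout_size D'" using pD' by simp
      moreover have "s = t * layout_size D'" using sz' Nil by (simp add: size_Nil)
      ultimately show False using lt by linarith
    next
      case (Cons h C'')
      obtain s2 d2 where h: "h = (s2,d2)" by (cases h)
      have c': "coalesced ((s,d)#(s2,d2)#C'')" using c Cons h by simp
      then have "d2 \<noteq> s * d" "coalesced ((s2,d2)#C'')" "s > 1" by simp_all
      then have "s2 > 1" using coalesced_tail[of "(s2,d2)" C''] by simp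
      have "t \<le> t * layout_size D'" using pD' by simp
      then have "s < s * layout_size C'" using lt sz' by linarith
      then have E: "phi ((s,d) # C') s = phi ((t,d) # D') s" using eq by blast
      have "s mod s = 0" "s div s = 1" "1 mod s2 = 1" "1 div s2 = 0"
        using \<open>s2 > 1\<close> \<open>s > 1\<close> by simp_all
      then have L: "phi ((s,d) # C') s = d2" using Cons h by simp
      have "s mod t = s" "s div t = 0" using lt by simp_all
      then have R: "phi ((t,d) # D') s = s * d" by simp
      show False using E L R \<open>d2 \<noteq> s * d\<close> by simp
    qed
    have c1: "coalesced ((s,d) # C')" using P(1) m by simp
    have c2: "coalesced ((t,d) # D')" using P(2) DC n de by simp
    have e1: "\<forall>x < s * layout_size C'. phi ((s,d) # C') x = phi ((t,d) # D') x"
      using P(4) szC m DC n de by simp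
    have e2: "\<forall>x < t * layout_size D'. phi ((t,d) # D') x = phi ((s,d) # C') x"
      using e1 sz by simp
    have st: "s = t"
    proof (rule ccontr)
      assume "s \<noteq> t"
      then consider "s < t" | "t < s" by linarith
      then show False
      proof cases
        case 1
        show False by (rule key[OF 1 c1 e1 sz pD])
      next
        case 2
        show False by (rule key[OF 2 c2 e2 sz[symmetric] pC])
      qed
    qed
    have sz2: "layout_size C' = layout_size D'" using sz st cC by simp
    have "\<forall>y < layout_size C'. phi C' y = phi D' y"
    proof (intro allI impI)
      fix y assume y: "y < layout_size C'"
      have "y * s < layout_size (m # C')" using y szC cC by simp
      then have "phi (m # C') (y * s) = phi D (y * s)" using P(4) by blast
      then show "phi C' y = phi D' y" using DC m n st cC by simp
    qed
    then have "C' = D'" using IH cC cD sz2 by blast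
    then show ?thesis using DC m n st de by simp
  qed
qed

lemma lf_iff: "layout_fun A = layout_fun B \<longleftrightarrow>
  (layout_size A = layout_size B \<and> (\<forall>x < layout_size A. phi A x = phi B x))"
proof
  assume h: "layout_fun A = layout_fun B"
  have s: "layout_size A = layout_size B"
  proof (rule ccontr)
    assume "layout_size A \<noteq> layout_size B"
    then consider "layout_size A < layout_size B" | "layout_size B < layout_size A" by linarith
    then show False
    proof cases
      case 1 then show False using fun_cong[OF h, of "layout_size A"] by (simp add: layout_fun_phi)
    next
      case 2 then show False using fun_cong[OF h, of "layout_size B"] by (simp add: layout_fun_phi)
    qed
  qed
  moreover have "\<forall>x < layout_size A. phi A x = phi B x"
  proof (intro allI impI)
    fix x assume "x < layout_size A"
    then show "phi A x = phi B x" using fun_cong[OF h, of x] s by (simp add: layout_fun_phi)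
  qed
  ultimately show "layout_size A = layout_size B \<and> (\<forall>x < layout_size A. phi A x = phi B x)" by blast
next
  assume "layout_size A = layout_size B \<and> (\<forall>x < layout_size A. phi A x = phi B x)"
  then show "layout_fun A = layout_fun B" by (auto simp: layout_fun_phi)
qed

lemma coal_props: "phi (coal_flat L) x = phi L x" "layout_size (coal_flat L) = layout_size L"
  by (simp_all add: coal_flat_def merge_props phi_squeeze size_squeeze)

lemma coal_coalesced: "flat_layout L \<Longrightarrow> coalesced (coal_flat L)"
  unfolding coal_flat_def
  by (rule merge_coalesced) (auto simp: squeeze_def flat_layout_def)

theorem mainTheorem10:
  fixes A B :: layout
  assumes "flat_layout A" and "flat_layout B"
  shows "layout_fun A = layout_fun B \<longleftrightarrow> coal_flat A = coal_flat B"
proof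
  assume "layout_fun A = layout_fun B"
  then have "layout_size (coal_flat A) = layout_size (coal_flat B)"
    "\<forall>x < layout_size (coal_flat A). phi (coal_flat A) x = phi (coal_flat B) x"
    by (simp_all add: lf_iff coal_props)
  then show "coal_flat A = coal_flat B"
    using uniq coal_coalesced assms by blast
next
  assume h: "coal_flat A = coal_flat B"
  have "layout_fun (coal_flat A) = layout_fun (coal_flat B)" using h by simp
  then show "layout_fun A = layout_fun B" by (simp add: lf_iff coal_props)
qed

end
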